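(* Let $n\ge2$, let $P$ be a partial $n$-Metric on a set $X$, and let $\{x_i\}_{i\in\mathbb{N}}$, $\{y_i\}_{i\in\mathbb{N}}$ be sequences in $X$ forming a Cauchy pair with central distance $r$. Then $\{x_i\}$ and $\{y_i\}$ are both Cauchy sequences with central distance $r$. Moreover, if $a$ is a limit (respectively, a special limit) of $\{x_i\}$, then $a$ is a limit (respectively, a special limit) of $\{y_i\}$.
   Context: Notation: $\langle a\rangle^k$ denotes the $k$-tuple $(a,\dots,a)$ inserted into an argument list. A partial $n$-Metric on $X$ is a function $P:X^n\to\mathbb{R}$ such that for all $x_1,\dots,x_n,a\in X$: (1) $P(\langle x_1\rangle^n)\le P(\langle x_1\rangle^{n-1},x_2)$; (2) $P$ is invariant under permutations of its arguments; (3) $P(\langle x_1\rangle^{n-1},x_2)=P(\langle x_1\rangle^n)$ and $P(\langle x_2\rangle^{n-1},x_1)=P(\langle x_2\rangle^n)$ iff $x_1=x_2$; (4) $P(x_1,\dots,x_n)\le P(x_1,\dots,x_{n-1},a)+P(\langle a\rangle^{n-1},x_n)-P(\langle a\rangle^n)$. Two sequences $\{x_i\},\{y_i\}$ form a Cauchy pair with central distance $r\in\mathbb{R}$ if for every $\epsilon>0$ there is $N$ such that for all $i,j>N$: $r-\epsilon<\min\{P(\langle x_i\rangle^n),P(\langle y_i\rangle^n)\}\le P(\langle x_i\rangle^{n-1},y_j)<r+\epsilon$. A sequence is Cauchy with central distance $r$ if for every $\epsilon>0$ there is $N$ with $|P(x_{i_1},\dots,x_{i_n})-r|<\epsilon$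 for all $i_1,\dots,i_n>N$. A point $a$ is a limit of $\{x_i\}$ iff for every $\epsilon>0$ there is $N$ with $P(\langle a\rangle^{n-1},x_i)-P(\langle a\rangle^n)<\epsilon$ for all $i>N$; a special limit of a Cauchy sequence with central distance $r$ is a limit $a$ with $P(\langle a\rangle^n)=r$. *)

theory Defs
  imports "HOL-Analysis.Analysis"
begin

text \<open>A function of n arguments is represented as a function on lists; only lists
of length n with entries in X are relevant. replicate k a is the k-tuple of a's.\<close>

definition partial_nmetric :: "nat \<Rightarrow> 'a set \<Rightarrow> ('a list \<Rightarrow> real) \<Rightarrow> bool" where
  "partial_nmetric n X P \<longleftrightarrow>
     (\<forall>x1\<in>X. \<forall>x2\<in>X. P (replicate n x1) \<le> P (replicate (n-1) x1 @ [x2])) \<and>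
     (\<forall>xs ys. length xs = n \<and> set xs \<subseteq> X \<and> mset ys = mset xs \<longrightarrow> P xs = P ys) \<and>
     (\<forall>x1\<in>X. \<forall>x2\<in>X.
        (P (replicate (n-1) x1 @ [x2]) = P (replicate n x1) \<and>
         P (replicate (n-1) x2 @ [x1]) = P (replicate n x2)) \<longleftrightarrow> x1 = x2) \<and>
     (\<forall>xs a. length xs = n \<and> set xs \<subseteq> X \<and> a \<in> X \<longrightarrow>
        P xs \<le> P (butlast xs @ [a]) + P (replicate (n-1) a @ [last xs]) - P (replicate n a))"

definition cauchy_pair ::
  "nat \<Rightarrow> ('a list \<Rightarrow> real) \<Rightarrow> (nat \<Rightarrow> 'a) \<Rightarrow> (nat \<Rightarrow> 'a) \<Rightarrow> real \<Rightarrow> bool" where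
  "cauchy_pair n P x y r \<longleftrightarrow>
     (\<forall>\<epsilon>>0. \<exists>N. \<forall>i j. i > N \<and> j > N \<longrightarrow>
        r - \<epsilon> < min (P (replicate n (x i))) (P (replicate n (y i))) \<and>
        min (P (replicate n (x i))) (P (replicate n (y i))) \<le> P (replicate (n-1) (x i) @ [y j]) \<and>
        P (replicate (n-1) (x i) @ [y j]) < r + \<epsilon>)"

definition cauchy_seq_central ::
  "nat \<Rightarrow> ('a list \<Rightarrow> real) \<Rightarrow> (nat \<Rightarrow> 'a) \<Rightarrow> real \<Rightarrow> bool" where
  "cauchy_seq_central n P x r \<longleftrightarrow>
     (\<forall>\<epsilon>>0. \<exists>N. \<forall>is. length is = n \<and> (\<forall>i\<in>set is. i > N) \<longrightarrow>
        \<bar>P (map x is) - r\<bar> < \<epsilon>)"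

definition is_limit :: "nat \<Rightarrow> ('a list \<Rightarrow> real) \<Rightarrow> (nat \<Rightarrow> 'a) \<Rightarrow> 'a \<Rightarrow> bool" where
  "is_limit n P x a \<longleftrightarrow>
     (\<forall>\<epsilon>>0. \<exists>N. \<forall>i>N. P (replicate (n-1) a @ [x i]) - P (replicate n a) < \<epsilon>)"

definition is_special_limit ::
  "nat \<Rightarrow> ('a list \<Rightarrow> real) \<Rightarrow> (nat \<Rightarrow> 'a) \<Rightarrow> real \<Rightarrow> 'a \<Rightarrow> bool" where
  "is_special_limit n P x r a \<longleftrightarrow> is_limit n P x a \<and> P (replicate n a) = r"

end

theory Submission
  imports Defs
begin

definition Dd :: "nat \<Rightarrow> ('a list \<Rightarrow> real) \<Rightarrow> 'a \<Rightarrow> 'a \<Rightarrow> real" where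
  "Dd n P a b = P (replicate (n-1) a @ [b]) - P (replicate n a)"

lemma pm_perm:
  assumes "partial_nmetric n X P" "length xs = n" "set xs \<subseteq> X" "mset ys = mset xs"
  shows "P xs = P ys"
proof -
  have "\<forall>xs ys. length xs = n \<and> set xs \<subseteq> X \<and> mset ys = mset xs \<longrightarrow> P xs = P ys"
    using assms(1) unfolding partial_nmetric_def by (elim conjE)
  then show ?thesis using assms(2-4) by blast
qed

lemma pm_tri:
  assumes "partial_nmetric n X P" "length xs = n" "set xs \<subseteq> X" "a \<in> X"
  shows "P xs \<le> P (butlast xs @ [a]) + Dd n P a (last xs)"
proof -
  have "\<forall>xs a. length xs = n \<and> set xs \<subseteq> X \<and> a \<in> X \<longrightarrow>
        P xs \<le> P (butlast xs @ [a]) + P (replicate (n-1) a @ [last xs]) - P (replicate n a)"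
    using assms(1) unfolding partial_nmetric_def by (elim conjE)
  then have "P xs \<le> P (butlast xs @ [a]) + P (replicate (n-1) a @ [last xs]) - P (replicate n a)"
    using assms(2-4) by blast
  then show ?thesis unfolding Dd_def by simp
qed

lemma pm_D_nonneg:
  assumes "partial_nmetric n X P" "a \<in> X" "b \<in> X"
  shows "0 \<le> Dd n P a b"
proof -
  have "\<forall>x1\<in>X. \<forall>x2\<in>X. P (replicate n x1) \<le> P (replicate (n-1) x1 @ [x2])"
    using assms(1) unfolding partial_nmetric_def by (elim conjE)
  then show ?thesis using assms(2-3) unfolding Dd_def by auto
qed

lemma pm_D_self:
  assumes "n \<ge> 1"
  shows "Dd n P a a = 0"
proof -
  have "replicate (n-1) a @ [a] = replicate n a"
    using assms by (metis Suc_diff_1 less_le_trans zero_less_one replicate_Suc replicate_append_same)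
  then show ?thesis unfolding Dd_def by simp
qed

lemma pm_D_tri:
  assumes "partial_nmetric n X P" "n \<ge> 1" "s \<in> X" "t \<in> X" "w \<in> X"
  shows "Dd n P s t \<le> Dd n P s w + Dd n P w t"
proof -
  have "P (replicate (n-1) s @ [t]) \<le> P (butlast (replicate (n-1) s @ [t]) @ [w]) + Dd n P w (last (replicate (n-1) s @ [t]))"
    by (rule pm_tri[OF assms(1)]) (use assms in auto)
  then show ?thesis unfolding Dd_def by simp
qed

lemma rep_snoc: "replicate m c @ [c] = replicate (Suc m) c"
  by (simp add: replicate_append_same)

lemma pm_upper:
  assumes "partial_nmetric n X P" "c \<in> X"
  shows "length us + m = n \<Longrightarrow> set us \<subseteq> X \<Longrightarrow>
    P (us @ replicate m c) \<le> P (replicate n c) + sum_list (map (Dd n P c) us)"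
proof (induction us arbitrary: m)
  case Nil
  then show ?case by simp
next
  case (Cons t us)
  have IH: "P (us @ replicate (Suc m) c) \<le> P (replicate n c) + sum_list (map (Dd n P c) us)"
    using Cons by auto
  have "P (t # us @ replicate m c) = P (us @ replicate m c @ [t])"
    by (rule pm_perm[OF assms(1)]) (use Cons assms in auto)
  also have "\<dots> \<le> P (butlast (us @ replicate m c @ [t]) @ [c]) + Dd n P c (last (us @ replicate m c @ [t]))"
    by (rule pm_tri[OF assms(1)]) (use Cons assms in auto)
  also have "\<dots> = P (us @ replicate (Suc m) c) + Dd n P c t"
    using rep_snoc[of m c] by (simp del: replicate_Suc add: butlast_append)
  finally show ?case using IH by simp
qed

lemma pm_lower:
  assumes "partial_nmetric n X P" "c \<in> X"
  shows "length us + m = n \<Longrightarrow> set us \<subseteq> X \<Longrightarrow>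
    P (replicate n c) - sum_list (map (\<lambda>t. Dd n P t c) us) \<le> P (us @ replicate m c)"
proof (induction us arbitrary: m)
  case Nil
  then show ?case by simp
next
  case (Cons t us)
  have IH: "P (replicate n c) - sum_list (map (\<lambda>t. Dd n P t c) us) \<le> P (us @ replicate (Suc m) c)"
    using Cons by auto
  have "P (us @ replicate (Suc m) c) = P (us @ replicate m c @ [c])"
    using rep_snoc[of m c] by (simp del: replicate_Suc)
  also have "\<dots> \<le> P (butlast (us @ replicate m c @ [c]) @ [t]) + Dd n P t (last (us @ replicate m c @ [c]))"
    by (rule pm_tri[OF assms(1)]) (use Cons assms in auto)
  also have "\<dots> = P (us @ replicate m c @ [t]) + Dd n P t c"
    by (simp flip: append_assoc)
  also have "P (us @ replicate m c @ [t]) = P (t # us @ replicate m c)"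
    by (rule pm_perm[OF assms(1)]) (use Cons assms in auto)
  finally show ?case using IH by simp
qed

lemma sum_list_bound:
  assumes "\<And>t. t \<in> set us \<Longrightarrow> f t \<le> (B::real)"
  shows "sum_list (map f us) \<le> real (length us) * B"
  using assms
proof (induction us)
  case (Cons a us)
  then have "f a \<le> B" "sum_list (map f us) \<le> real (length us) * B" by auto
  then show ?case by (simp add: algebra_simps)
qed simp

theorem lemma4p19:
  fixes n :: nat and X :: "'a set" and P :: "'a list \<Rightarrow> real"
    and x y :: "nat \<Rightarrow> 'a" and r :: real
  assumes "n \<ge> 2"
    and "partial_nmetric n X P"
    and "\<And>i. x i \<in> X" and "\<And>i. y i \<in> X"
    and "cauchy_pair n P x y r"
  shows "cauchy_seq_central n P x r \<and> cauchy_seq_central n P y r \<and>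
         (\<forall>a\<in>X. is_limit n P x a \<longrightarrow> is_limit n P y a) \<and>
         (\<forall>a\<in>X. is_special_limit n P x r a \<longrightarrow> is_special_limit n P y r a)"
proof -
  note pm = assms(2)
  have n1: "n \<ge> 1" using assms(1) by simp
  have key: "\<exists>N. (\<forall>k j. k > N \<longrightarrow> j > N \<longrightarrow> Dd n P (x k) (y j) < 2*e) \<and>
      (\<forall>us. length us = n \<longrightarrow> set us \<subseteq> {s. \<exists>i>N. s = x i \<or> s = y i} \<longrightarrow>
         \<bar>P us - r\<bar> < e * (1 + real n * (2 * real n + 2)))" if e: "e > 0" for e
  proof -
    obtain N where N: "\<And>i j. i > N \<Longrightarrow> j > N \<Longrightarrow>
        r - e < min (P (replicate n (x i))) (P (replicate n (y i))) \<and>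
        min (P (replicate n (x i))) (P (replicate n (y i))) \<le> P (replicate (n-1) (x i) @ [y j]) \<and>
        P (replicate (n-1) (x i) @ [y j]) < r + e"
      using assms(5) e unfolding cauchy_pair_def by meson
    have P1: "P (replicate n a) \<le> P (replicate (n-1) a @ [b])" if "a \<in> X" "b \<in> X" for a b
      using pm_D_nonneg[OF pm that] unfolding Dd_def by simp
    have F1: "r - e < P (replicate n (x i)) \<and> P (replicate n (x i)) < r + e" if "i > N" for i
      using N[OF that that] P1[OF assms(3) assms(4), of i i] by linarith
    have F2: "r - e < P (replicate n (y i))" if "i > N" for i
      using N[OF that that] by linarith
    have F3: "Dd n P (x k) (y j) < 2*e" if "k > N" "j > N" for k j
      using N[OF that] F1[OF that(1)] unfolding Dd_def by linarith
    have F4: "Dd n P (y j) (x k) < 2 * real n * e" if "k > N" "j > N" for k j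
    proof -
      have "P ((replicate (n-1) (y j) @ [x k]) @ replicate 0 (x k)) \<le> P (replicate n (x k))
          + sum_list (map (Dd n P (x k)) (replicate (n-1) (y j) @ [x k]))"
        by (rule pm_upper[OF pm assms(3)]) (use n1 assms in auto)
      then have "P (replicate (n-1) (y j) @ [x k]) \<le> P (replicate n (x k)) + real (n-1) * Dd n P (x k) (y j)"
        using pm_D_self[OF n1, of P "x k"] by (simp add: sum_list_replicate)
      moreover have "real (n-1) * Dd n P (x k) (y j) \<le> real (n-1) * (2*e)"
        using F3[OF that] by (intro mult_left_mono) auto
      moreover have "real (n-1) = real n - 1" using n1 by simp
      ultimately show ?thesis using F1[OF that(1)] F2[OF that(2)] unfolding Dd_def
        by (simp add: algebra_simps)
    qed
    define S where "S = {s. \<exists>i>N. s = x i \<or> s = y i}"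
    have SX: "S \<subseteq> X" using assms(3,4) unfolding S_def by auto
    have F5: "Dd n P s t \<le> (2 * real n + 2) * e" if sS: "s \<in> S" and tS: "t \<in> S" for s t
    proof -
      have xy: "Dd n P (x k) (y j) \<le> 2 * e" "Dd n P (y j) (x k) \<le> 2 * real n * e"
        if "k > N" "j > N" for k j using F3[OF that] F4[OF that] by auto
      have nn: "0 \<le> real n * e" using e by simp
      obtain i where i: "i > N" "s = x i \<or> s = y i" using sS unfolding S_def by auto
      obtain j where j: "j > N" "t = x j \<or> t = y j" using tS unfolding S_def by auto
      show ?thesis
      proof (cases "s = x i")
        case sx: True
        show ?thesis
        proof (cases "t = x j")
          case True
          have "Dd n P (x i) (x j) \<le> Dd n P (x i) (y i) + Dd n P (y i) (x j)"
            using pm_D_tri[OF pm n1] assms(3,4) by blast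
          then show ?thesis using xy[OF i(1) i(1)] xy[OF j(1) i(1)] sx True
            by (simp add: algebra_simps)
        next
          case False
          then have "t = y j" using j by auto
          then show ?thesis using xy[OF i(1) j(1)] sx nn by (simp add: algebra_simps)
        qed
      next
        case False
        then have sy: "s = y i" using i by auto
        show ?thesis
        proof (cases "t = x j")
          case True
          then show ?thesis using xy[OF j(1) i(1)] sy e by (simp add: algebra_simps)
        next
          case False
          then have ty: "t = y j" using j by auto
          have "Dd n P (y i) (y j) \<le> Dd n P (y i) (x i) + Dd n P (x i) (y j)"
            using pm_D_tri[OF pm n1] assms(3,4) by blast
          then show ?thesis using xy[OF i(1) i(1)] xy[OF i(1) j(1)] sy ty
            by (simp add: algebra_simps)
        qed
      qed
    qed
    have c: "x (Suc N) \<in> X" using assms(3) by simp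
    have cS: "x (Suc N) \<in> S" unfolding S_def by auto
    have T: "\<bar>P us - r\<bar> < e * (1 + real n * (2 * real n + 2))"
      if "length us = n" "set us \<subseteq> S" for us
    proof -
      have usX: "set us \<subseteq> X" using that SX by auto
      have "P (us @ replicate 0 (x (Suc N))) \<le> P (replicate n (x (Suc N))) + sum_list (map (Dd n P (x (Suc N))) us)"
        by (rule pm_upper[OF pm c]) (use that usX in auto)
      moreover have "sum_list (map (Dd n P (x (Suc N))) us) \<le> real (length us) * ((2 * real n + 2) * e)"
        by (rule sum_list_bound) (use F5[OF cS] that in auto)
      moreover have "P (replicate n (x (Suc N))) - sum_list (map (\<lambda>t. Dd n P t (x (Suc N))) us) \<le> P (us @ replicate 0 (x (Suc N)))"
        by (rule pm_lower[OF pm c]) (use that usX in auto)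
      moreover have "sum_list (map (\<lambda>t. Dd n P t (x (Suc N))) us) \<le> real (length us) * ((2 * real n + 2) * e)"
        by (rule sum_list_bound) (use F5[OF _ cS] that in auto)
      ultimately show ?thesis using F1[of "Suc N"] that(1) by (simp add: algebra_simps abs_less_iff)
    qed
    show ?thesis using F3 T unfolding S_def by blast
  qed
  have cs: "cauchy_seq_central n P z r" if z: "z = x \<or> z = y" for z
    unfolding cauchy_seq_central_def
  proof (intro allI impI)
    fix \<epsilon> :: real assume ep: "\<epsilon> > 0"
    define c where "c = 1 + real n * (2 * real n + 2)"
    have cpos: "c > 0" unfolding c_def by (simp add: add_pos_nonneg)
    obtain N where N: "\<And>us. length us = n \<Longrightarrow> set us \<subseteq> {s. \<exists>i>N. s = x i \<or> s = y i} \<Longrightarrow>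
         \<bar>P us - r\<bar> < (\<epsilon>/c) * c"
      using key[of "\<epsilon>/c"] ep cpos unfolding c_def by auto
    show "\<exists>N. \<forall>is. length is = n \<and> (\<forall>i\<in>set is. N < i) \<longrightarrow> \<bar>P (map z is) - r\<bar> < \<epsilon>"
    proof (intro exI allI impI)
      fix "is" :: "nat list" assume h: "length is = n \<and> (\<forall>i\<in>set is. N < i)"
      have "\<bar>P (map z is) - r\<bar> < (\<epsilon>/c) * c"
        by (rule N) (use h z in auto)
      then show "\<bar>P (map z is) - r\<bar> < \<epsilon>" using cpos by simp
    qed
  qed
  have lim: "is_limit n P y a" if a: "a \<in> X" and la: "is_limit n P x a" for a
    unfolding is_limit_def
  proof (intro allI impI)
    fix \<epsilon> :: real assume ep: "\<epsilon> > 0"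
    obtain N1 where N1: "\<And>i. i > N1 \<Longrightarrow> Dd n P a (x i) < \<epsilon>/2"
      using la ep unfolding is_limit_def Dd_def by (meson half_gt_zero)
    obtain N2 where N2: "\<And>k j. k > N2 \<Longrightarrow> j > N2 \<Longrightarrow> Dd n P (x k) (y j) < 2*(\<epsilon>/4)"
      using key[of "\<epsilon>/4"] ep by auto
    show "\<exists>N. \<forall>i>N. P (replicate (n - 1) a @ [y i]) - P (replicate n a) < \<epsilon>"
    proof (intro exI allI impI)
      fix i assume i: "i > max N1 N2"
      define k where "k = Suc (max N1 N2)"
      have "Dd n P a (y i) \<le> Dd n P a (x k) + Dd n P (x k) (y i)"
        using pm_D_tri[OF pm n1 a] assms(3,4) by blast
      moreover have "Dd n P a (x k) < \<epsilon>/2" using N1 k_def by simp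
      moreover have "Dd n P (x k) (y i) < 2*(\<epsilon>/4)" using N2 k_def i by simp
      ultimately show "P (replicate (n - 1) a @ [y i]) - P (replicate n a) < \<epsilon>"
        unfolding Dd_def by linarith
    qed
  qed
  show ?thesis using cs lim unfolding is_special_limit_def by blast
qed

end
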